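(* Suppose $G$ is continuous. If $\mathbb{E}_{v\sim F}\left[\int_0^{b^*(v,0)}G(y)\,dy\right]=0$, then for any credibility $\alpha_0\in[0,1]$, no bidding algorithm can obtain positive expected reward.
   Context: Setting: repeated non-credible second-price auction; values $v\in[0,1]$ drawn i.i.d. from distribution $F$; highest competing bid $d$ drawn from distribution $G$ (CDF $G$) independently; a bidder bidding $b$ wins if $b\ge d$ and then pays $\alpha_0d+(1-\alpha_0)b$, receiving reward $v$ minus payment (and $0$ if she loses). Define $r(v,b,\alpha)=(v-b)G(b)+\alpha\int_0^bG(y)\,dy$ (the expected reward of bid $b$ with value $v$ under credibility $\alpha$) and $b^*(v,\alpha)=\arg\max_b r(v,b,\alpha)$, taking the largest maximizer in case of ties. *)

theory Defs
  imports "HOL-Probability.Probability"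
begin

text \<open>Expected reward of bid b with value v under credibility alpha, when the
highest competing bid has CDF G:  r(v,b,alpha) = (v - b) G(b) + alpha * int_0^b G(y) dy.\<close>
definition reward :: "(real \<Rightarrow> real) \<Rightarrow> real \<Rightarrow> real \<Rightarrow> real \<Rightarrow> real" where
  "reward G v b \<alpha> = (v - b) * G b + \<alpha> * integral {0..b} G"

definition bstar :: "(real \<Rightarrow> real) \<Rightarrow> real \<Rightarrow> real \<Rightarrow> real" where
  "bstar G v \<alpha> = (GREATEST b. 0 \<le> b \<and> (\<forall>b'\<ge>0. reward G v b' \<alpha> \<le> reward G v b \<alpha>))"

end

theory Submission
  imports Defs
begin

context
  fixes G :: "real \<Rightarrow> real"
  assumes Gmono: "\<And>x y. x \<le> y \<Longrightarrow> G x \<le> G y"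
    and Gnn: "\<And>x. 0 \<le> G x"
    and Gcont: "continuous_on UNIV G"
    and Gneg: "\<And>x. x < 0 \<Longrightarrow> G x = 0"
    and Gbig: "\<exists>B. G B \<ge> 1/2"
begin

lemma rew0: "reward G v b 0 = (v - b) * G b"
  by (simp add: reward_def)

lemma bstar_prop:
  shows "0 \<le> bstar G v 0 \<and> (\<forall>b'\<ge>0. reward G v b' 0 \<le> reward G v (bstar G v 0) 0)
     \<and> (\<forall>b. 0 \<le> b \<and> (\<forall>b'\<ge>0. reward G v b' 0 \<le> reward G v b 0) \<longrightarrow> b \<le> bstar G v 0)"
proof -
  define f where "f = (\<lambda>b. (v - b) * G b)"
  have fc: "continuous_on UNIV f" unfolding f_def
    by (intro continuous_intros Gcont)
  define K where "K = max v 0"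
  obtain b0 where b0: "b0 \<in> {0..K}" "\<forall>b\<in>{0..K}. f b \<le> f b0"
    using continuous_attains_sup[of "{0..K}" f] fc
    by (metis K_def atLeastAtMost_iff compact_Icc continuous_on_subset empty_iff max.cobounded2 order_refl top_greatest)
  have dec: "f b \<le> f K" if "K \<le> b" for b
  proof -
    have "(v - b) * G b \<le> (v - K) * G b" using that Gnn[of b] by (intro mult_right_mono) auto
    also have "\<dots> \<le> (v - K) * G K" using Gmono[OF that] K_def by (intro mult_left_mono_neg) auto
    finally show ?thesis by (simp add: f_def)
  qed
  have maxall: "\<forall>b\<ge>0. f b \<le> f b0"
  proof (intro allI impI)
    fix b :: real assume "0 \<le> b"
    show "f b \<le> f b0"
    proof (cases "b \<le> K")
      case True then show ?thesis using b0 \<open>0 \<le> b\<close> by auto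
    next
      case False
      then have "f b \<le> f K" using dec by auto
      also have "f K \<le> f b0" using b0 K_def by auto
      finally show ?thesis .
    qed
  qed
  obtain B where B: "G B \<ge> 1/2" using Gbig by auto
  define K' where "K' = max (max B K) (v - 2 * f b0)"
  have bnd: "b \<le> K'" if "f b0 \<le> f b" for b
  proof (cases "b \<le> max B K")
    case True then show ?thesis by (simp add: K'_def)
  next
    case False
    then have "B \<le> b" by auto
    then have "G b \<ge> 1/2" using Gmono[of B b] B by auto
    moreover have "v - b \<le> 0" using False K_def by auto
    ultimately have "(v - b) * G b \<le> (v - b) * (1/2)" by (intro mult_left_mono_neg) auto
    then have "f b \<le> (v - b)/2" by (simp add: f_def)
    then show ?thesis using that by (simp add: K'_def)
  qed
  define S where "S = {0..K'} \<inter> {b. f b0 \<le> f b}"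
  have "closed {b. f b0 \<le> f b}"
    using fc by (intro closed_Collect_le continuous_on_const) auto
  then have "compact S" unfolding S_def by (intro compact_Int_closed) auto
  moreover have "b0 \<in> S" using b0 bnd[of b0] unfolding S_def by auto
  then have "S \<noteq> {}" by auto
  ultimately obtain x where x: "x \<in> S" "\<forall>y\<in>S. y \<le> x" using compact_attains_sup by blast
  define P where "P = (\<lambda>b. 0 \<le> b \<and> (\<forall>b'\<ge>0. reward G v b' 0 \<le> reward G v b 0))"
  have Px: "P x" using x maxall unfolding P_def S_def by (auto simp: rew0 f_def intro: order_trans)
  have Pg: "y \<le> x" if "P y" for y
  proof -
    have "f b0 \<le> f y" using that b0 unfolding P_def f_def rew0 K_def by auto
    then have "y \<in> S" using that bnd unfolding S_def P_def by auto
    then show ?thesis using x by auto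
  qed
  have "bstar G v 0 = x" unfolding bstar_def
    using Greatest_equality[of P x] Px Pg unfolding P_def by auto
  then show ?thesis using Px Pg unfolding P_def by auto
qed


lemma bstar_mono: assumes "v1 \<le> v2" shows "bstar G v1 0 \<le> bstar G v2 0"
proof (rule ccontr)
  let ?b1 = "bstar G v1 0" and ?b2 = "bstar G v2 0"
  assume "\<not> ?b1 \<le> ?b2"
  then have lt: "?b2 < ?b1" by auto
  have p1: "0 \<le> ?b1" "\<forall>b'\<ge>0. reward G v1 b' 0 \<le> reward G v1 ?b1 0" using bstar_prop[of v1] by auto
  have p2: "\<forall>b'\<ge>0. reward G v2 b' 0 \<le> reward G v2 ?b2 0"
    "\<forall>b. 0 \<le> b \<and> (\<forall>b'\<ge>0. reward G v2 b' 0 \<le> reward G v2 b 0) \<longrightarrow> b \<le> ?b2"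
    "0 \<le> ?b2" using bstar_prop[of v2] by auto
  have "reward G v1 ?b2 0 \<le> reward G v1 ?b1 0" using p1 p2 by auto
  moreover have "(v2 - v1) * G ?b2 \<le> (v2 - v1) * G ?b1" using assms Gmono[of ?b2 ?b1] lt
    by (intro mult_left_mono) auto
  ultimately have "reward G v2 ?b2 0 \<le> reward G v2 ?b1 0" by (simp add: rew0 algebra_simps)
  then have "\<forall>b'\<ge>0. reward G v2 b' 0 \<le> reward G v2 ?b1 0" using p2 by (auto intro: order_trans)
  then have "?b1 \<le> ?b2" using p2 p1 by auto
  then show False using lt by auto
qed

lemma Gint: "G integrable_on {a..b}"
  using Gcont by (intro integrable_continuous_interval) (auto intro: continuous_on_subset)

lemma intmono: assumes "0 \<le> x" "x \<le> y" shows "integral {0..x} G \<le> integral {0..y} G"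
  using assms Gnn by (intro integral_subset_le Gint) auto

lemma h_mono: "mono (\<lambda>v. integral {0..bstar G v 0} G)"
  by (rule monoI, rule intmono) (use bstar_prop bstar_mono in auto)

lemma zero_at: assumes "\<And>x. x < s \<Longrightarrow> G x = 0" shows "G s = 0"
proof -
  have "(G \<longlongrightarrow> G s) (at_left s)"
    using Gcont by (simp add: continuous_on filterlim_at_split)
  moreover have "(G \<longlongrightarrow> 0) (at_left s)"
    by (rule tendsto_eventually) (auto simp: eventually_at_left_field assms intro!: exI[of _ "s - 1"])
  ultimately show ?thesis using tendsto_unique[OF trivial_limit_at_left_real] by blast
qed

lemma key:
  assumes v: "0 \<le> v" and h0: "integral {0..bstar G v 0} G = 0" and a: "0 \<le> \<alpha>" "\<alpha> \<le> 1"
  shows "reward G v b \<alpha> \<le> 0"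
proof -
  let ?s = "bstar G v 0"
  have s: "0 \<le> ?s" "\<forall>b'\<ge>0. reward G v b' 0 \<le> reward G v ?s 0" using bstar_prop[of v] by auto
  have Gs: "G c = 0" if "c < ?s" for c
  proof (cases "c < 0")
    case True then show ?thesis using Gneg by auto
  next
    case False
    have "integral {c..?s} (\<lambda>_. G c) \<le> integral {c..?s} G"
      using Gmono that by (intro integral_le Gint) auto
    also have "\<dots> \<le> integral {0..?s} G"
      using False that Gnn by (intro integral_subset_le Gint) auto
    finally have "(?s - c) * G c \<le> 0" using h0 that by simp
    then have "G c \<le> 0" using that by (simp add: mult_le_0_iff)
    then show ?thesis using Gnn[of c] by auto
  qed
  then have "G ?s = 0" by (rule zero_at)
  then have m0: "\<forall>b'\<ge>0. (v - b') * G b' \<le> 0" using s by (simp add: rew0)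
  have Gv: "G c = 0" if "c < v" for c
  proof (cases "c < 0")
    case True then show ?thesis using Gneg by auto
  next
    case False
    then have "(v - c) * G c \<le> 0" using m0 by auto
    then have "G c \<le> 0" using that by (simp add: mult_le_0_iff)
    then show ?thesis using Gnn[of c] by auto
  qed
  have Gv': "G c = 0" if "c \<le> v" for c
    using Gv zero_at[of c] that by auto
  have I0: "integral {0..x} G = 0" if "x \<le> v" for x
  proof -
    have "integral {0..x} G = integral {0..x} (\<lambda>_. 0::real)"
      using Gv' that by (intro integral_cong) auto
    then show ?thesis by simp
  qed
  show ?thesis
  proof (cases "b \<le> v")
    case True then show ?thesis using Gv' I0 by (simp add: reward_def)
  next
    case False
    have "integral {0..b} G = integral {0..v} G + integral {v..b} G"
      using False v by (intro Henstock_Kurzweil_Integration.integral_combine[symmetric] Gint) auto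
    also have "\<dots> = integral {v..b} G" using I0 by simp
    finally have e: "integral {0..b} G = integral {v..b} G" .
    have "integral {v..b} G \<le> integral {v..b} (\<lambda>_. G b)"
      using Gmono by (intro integral_le Gint) auto
    then have up: "integral {0..b} G \<le> (b - v) * G b" using e False by simp
    have lo: "0 \<le> integral {0..b} G" using Gnn by (intro integral_nonneg Gint) auto
    have "\<alpha> * integral {0..b} G \<le> integral {0..b} G" using a lo by (simp add: mult_left_le_one_le)
    then show ?thesis using up by (simp add: reward_def algebra_simps)
  qed
qed

end

theorem lemma10:
  fixes F D :: "real measure"
  assumes F_prob: "prob_space F" and F_sets: "sets F = sets borel"
    and F_supp: "AE v in F. v \<in> {0..1}"
    and D_prob: "prob_space D" and D_sets: "sets D = sets borel"
    and D_nonneg: "AE d in D. 0 \<le> d"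
    and G_cont: "continuous_on UNIV (cdf D)"
    and hyp: "(\<integral>v. integral {0..bstar (cdf D) v 0} (cdf D) \<partial>F) = 0"
  shows "\<forall>\<alpha>0\<in>{0..1}. \<forall>W (\<beta> :: 'w \<Rightarrow> real \<Rightarrow> real).
           prob_space W \<longrightarrow> (\<lambda>(w, v). \<beta> w v) \<in> borel_measurable (W \<Otimes>\<^sub>M F) \<longrightarrow>
           \<not> ((\<integral>(w, v). reward (cdf D) v (\<beta> w v) \<alpha>0 \<partial>(W \<Otimes>\<^sub>M F)) > 0)"
proof (intro ballI allI impI)
  interpret D: real_distribution D
    by (simp add: real_distribution_def real_distribution_axioms_def D_prob D_sets)
  interpret F: prob_space F by (rule F_prob)
  define G where "G = cdf D"
  have Gmono: "\<And>x y. x \<le> y \<Longrightarrow> G x \<le> G y" unfolding G_def by (rule D.cdf_nondecreasing)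
  have Gnn: "\<And>x. 0 \<le> G x" unfolding G_def by (rule D.cdf_nonneg)
  have Gcont: "continuous_on UNIV G" using G_cont by (simp add: G_def)
  have Gneg: "G x = 0" if "x < 0" for x
  proof -
    have "AE d in D. d \<notin> {..x}" using D_nonneg by eventually_elim (use that in auto)
    then have "{..x} \<in> null_sets D" using AE_iff_null_sets[of "{..x}" D] D_sets by auto
    then show ?thesis unfolding G_def cdf_def by (simp add: measure_eq_0_null_sets)
  qed
  have Gbig: "\<exists>B. G B \<ge> 1/2"
  proof -
    have "eventually (\<lambda>x. G x > 1/2) at_top"
      using order_tendstoD(1)[OF D.cdf_lim_at_top_prob, of "1/2"] by (simp add: G_def)
    then show ?thesis by (auto simp: eventually_at_top_linorder intro: less_imp_le)
  qed
  note L = Gmono Gnn Gcont Gneg Gbig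
  define h where "h = (\<lambda>v. integral {0..bstar G v 0} G)"
  have hm: "mono h" unfolding h_def by (rule h_mono[OF L])
  have hmeas: "h \<in> borel_measurable F"
    using borel_measurable_mono[OF hm] F_sets by (simp cong: measurable_cong_sets)
  have hnn: "0 \<le> h v" for v unfolding h_def using Gnn by (intro integral_nonneg Gint[OF L]) auto
  have "AE v in F. norm (h v) \<le> h 1"
    using F_supp by eventually_elim (use hnn monoD[OF hm] in auto)
  then have hint: "integrable F h" by (intro F.integrable_const_bound hmeas)
  have "AE v in F. h v = 0"
    using integral_nonneg_eq_0_iff_AE[OF hint] hnn hyp by (simp add: h_def G_def)
  fix \<alpha>0 :: real and W :: "'w measure" and \<beta> :: "'w \<Rightarrow> real \<Rightarrow> real"
  assume a: "\<alpha>0 \<in> {0..1}" and W: "prob_space W" and "(\<lambda>(w, v). \<beta> w v) \<in> borel_measurable (W \<Otimes>\<^sub>M F)"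
  interpret W: prob_space W by (rule W)
  have AEF: "AE v in F. \<forall>b. reward G v b \<alpha>0 \<le> 0"
    using \<open>AE v in F. h v = 0\<close> F_supp
    by eventually_elim (use a key[OF L] in \<open>auto simp: h_def\<close>)
  then obtain N where N: "N \<in> null_sets F" "{v \<in> space F. \<not> (\<forall>b. reward G v b \<alpha>0 \<le> 0)} \<subseteq> N"
    using AEF unfolding eventually_ae_filter by blast
  have "space W \<times> N \<in> null_sets (W \<Otimes>\<^sub>M F)"
    using N(1) F.emeasure_pair_measure_Times[of "space W" W N]
    by (auto simp: null_sets_def)
  then have "AE x in W \<Otimes>\<^sub>M F. reward G (snd x) (\<beta> (fst x) (snd x)) \<alpha>0 \<le> 0"
    by (rule AE_I') (use N(2) in \<open>fastforce simp: space_pair_measure\<close>)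
  then have "AE x in W \<Otimes>\<^sub>M F. 0 \<le> - (case x of (w, v) \<Rightarrow> reward (cdf D) v (\<beta> w v) \<alpha>0)"
    by eventually_elim (auto simp: G_def split: prod.splits)
  then have "0 \<le> (\<integral>x. - (case x of (w, v) \<Rightarrow> reward (cdf D) v (\<beta> w v) \<alpha>0) \<partial>(W \<Otimes>\<^sub>M F))"
    by (rule integral_nonneg_AE)
  then show "\<not> ((\<integral>(w, v). reward (cdf D) v (\<beta> w v) \<alpha>0 \<partial>(W \<Otimes>\<^sub>M F)) > 0)"
    by simp
qed

end
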